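(* Let $\kappa\in(0,\infty)$. There exists $C\in(0,\infty)$ such that for all $R,N\in[1,\infty)$ $$-C\le\sum_{l=0}^\infty\frac{2l+1}{2R^2\,(1+l(l+1)/R^2)\,(1+l(l+1)/(NR)^2)^\kappa}-\log(N+1)\le C.$$ *)

theory Defs
  imports "HOL-Analysis.Analysis"
begin

end

theory Submission
  imports Defs
begin

lemma ln_diff_bounds:
  fixes p q :: real assumes "0 < p" "p \<le> q"
  shows "(q-p)/q \<le> ln q - ln p" "ln q - ln p \<le> (q-p)/p"
proof -
  have q: "0 < q" using assms by linarith
  have "ln (p/q) \<le> p/q - 1" using ln_le_minus_one assms q by simp
  moreover have "ln (p/q) = ln p - ln q" using assms q by (simp add: ln_div)
  moreover have "p/q - 1 = -((q-p)/q)" using q by (simp add: field_simps)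
  ultimately show "(q-p)/q \<le> ln q - ln p" by linarith
  have "ln (q/p) \<le> q/p - 1" using ln_le_minus_one assms q by simp
  moreover have "ln (q/p) = ln q - ln p" using assms q by (simp add: ln_div)
  moreover have "q/p - 1 = ((q-p)/p)" using assms by (simp add: field_simps)
  ultimately show "ln q - ln p \<le> (q-p)/p" by linarith
qed

lemma inv_b_bound:
  fixes R :: real assumes "R \<ge> 1"
  shows "1/(2*(R^2 + real l * (real l + 1))) \<le> 1/(real l+1) - 1/(real (Suc l)+1)"
proof -
  have "R^2 \<ge> 1" using assms by (simp add: one_le_power)
  have e: "1/(real l+1) - 1/(real (Suc l)+1) = 1/((real l + 1)*(real l + 2))"
    by (simp add: field_simps)
  have ll: "real l \<le> real l * real l" by (cases l) auto
  have "(real l + 1)*(real l + 2) \<le> 2*(R^2 + real l * (real l + 1))"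
    using \<open>R^2 \<ge> 1\<close> ll by (simp add: algebra_simps)
  moreover have "0 < (real l + 1)*(real l + 2)" by simp
  moreover have "0 < 2*(R^2 + real l * (real l + 1))" using \<open>R^2 \<ge> 1\<close>
    by (intro mult_pos_pos add_pos_nonneg) auto
  ultimately show ?thesis unfolding e
    by (intro divide_left_mono mult_pos_pos) auto
qed

lemma E_sum:
  fixes R :: real assumes "R \<ge> 1"
  shows "(\<Sum>l<n. 1/(2*(R^2 + real l * (real l + 1)))) \<le> 1"
proof -
  have "(\<Sum>l<n. 1/(2*(R^2 + real l * (real l + 1)))) \<le> (\<Sum>l<n. 1/(real l+1) - 1/(real (Suc l)+1))"
    by (intro sum_mono inv_b_bound assms)
  also have "\<dots> = 1 - 1/(real n + 1)"
    using sum_lessThan_telescope'[of "\<lambda>l. 1/(real l+1)" n] by simp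
  also have "\<dots> \<le> 1" by simp
  finally show ?thesis .
qed

lemma odd_sum: "(\<Sum>l<n. (2 * real l + 1)) = real n ^ 2"
  by (induction n) (auto simp: power2_eq_square algebra_simps)

lemma kappa_factor:
  fixes \<kappa> y :: real assumes "\<kappa> > 0" "y \<ge> 0"
  shows "1 - \<kappa> * y \<le> 1 / ((1+y) powr \<kappa>)" "1 / ((1+y) powr \<kappa>) \<le> 1"
proof -
  have "(1+y) powr \<kappa> \<le> exp y powr \<kappa>"
    using assms by (intro powr_mono2) (auto simp: exp_ge_add_one_self)
  also have "\<dots> = exp (\<kappa> * y)" by (simp add: powr_def)
  finally have "1/exp (\<kappa> * y) \<le> 1/((1+y) powr \<kappa>)"
    using assms by (intro divide_left_mono) auto
  moreover have "1/exp (\<kappa> * y) = exp (-(\<kappa>*y))" by (simp add: exp_minus field_simps)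
  moreover have "1 - \<kappa> * y \<le> exp (-(\<kappa>*y))" using exp_ge_add_one_self[of "-(\<kappa>*y)"] by simp
  ultimately show "1 - \<kappa> * y \<le> 1 / ((1+y) powr \<kappa>)" by linarith
  have "1 \<le> (1+y) powr \<kappa>" using assms by (intro ge_one_powr_ge_zero) auto
  then show "1 / ((1+y) powr \<kappa>) \<le> 1" by (simp add: divide_le_eq)
qed

lemma tail_ineq:
  fixes a x :: real assumes "a > 0" "x > 1"
  shows "x powr (-a-1) \<le> ((x-1) powr (-a) - x powr (-a))/a"
proof -
  have x0: "x > 0" "x - 1 > 0" using assms by auto
  have "ln x - ln (x-1) \<ge> (x - (x-1))/x" using ln_diff_bounds(1)[of "x-1" x] x0 by simp
  hence l: "ln x - ln (x-1) \<ge> 1/x" by simp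
  have "(x-1) powr (-a) = exp (a * (ln x - ln (x-1))) * x powr (-a)"
    using x0 by (simp add: powr_def exp_add[symmetric] algebra_simps)
  also have "exp (a * (ln x - ln (x-1))) \<ge> 1 + a/x"
  proof -
    have e1: "exp (a * (ln x - ln (x-1))) \<ge> 1 + a * (ln x - ln (x-1))" by (rule exp_ge_add_one_self)
    have "a * (ln x - ln (x-1)) \<ge> a * (1/x)" using l assms by (intro mult_left_mono) auto
    hence e2: "a * (ln x - ln (x-1)) \<ge> a/x" by simp
    from e1 e2 show ?thesis by linarith
  qed
  hence "exp (a * (ln x - ln (x-1))) * x powr (-a) \<ge> (1 + a/x) * x powr (-a)"
    by (intro mult_right_mono) auto
  finally have "(x-1) powr (-a) \<ge> x powr (-a) + a * (x powr (-a) / x)" by (simp add: algebra_simps)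
  moreover have "x powr (-a) / x = x powr (-a-1)" using x0 by (simp add: powr_diff)
  ultimately show ?thesis using assms by (simp add: field_simps)
qed

lemma head_upper:
  fixes R :: real assumes R: "R \<ge> 1"
  shows "(\<Sum>l<Suc n. (2 * real l + 1) / (2 * (R^2 + real l * (real l + 1))))
     \<le> (ln (R^2 + real n * (real n + 1)) - ln (R^2))/2 + 1"
proof -
  define b where "b l = R^2 + real l * (real l + 1)" for l
  define Q where "Q l = ln (b (l - 1))/2" for l
  have R2: "R^2 \<ge> 1" using R by (simp add: one_le_power)
  have bpos: "b l > 0" for l unfolding b_def using R2 by (intro add_pos_nonneg) auto
  have step: "(2 * real l + 1) / (2 * b l) \<le> Q (Suc l) - Q l + 1/(2 * b l)" for l
  proof (cases l)
    case 0 then show ?thesis by (simp add: Q_def)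
  next
    case (Suc k)
    have le: "b k \<le> b l" unfolding b_def Suc by (simp add: algebra_simps)
    have "(b l - b k)/b l \<le> ln (b l) - ln (b k)" using ln_diff_bounds(1)[OF bpos le] .
    moreover have "b l - b k = 2 * real l" unfolding b_def Suc by (simp add: algebra_simps)
    moreover have "Q (Suc l) - Q l = (ln (b l) - ln (b k))/2" unfolding Q_def Suc by simp
    moreover have "(2 * real l + 1) / (2 * b l) = (2 * real l)/b l / 2 + 1/(2 * b l)"
      using bpos[of l] by (simp add: field_simps)
    ultimately show ?thesis by simp
  qed
  have "(\<Sum>l<Suc n. (2 * real l + 1) / (2 * b l)) \<le> (\<Sum>l<Suc n. (Q (Suc l) - Q l) + 1/(2 * b l))"
    by (intro sum_mono step)
  also have "\<dots> = Q (Suc n) - Q 0 + (\<Sum>l<Suc n. 1/(2 * b l))"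
    by (simp add: sum.distrib sum_lessThan_telescope del: sum.lessThan_Suc)
  also have "(\<Sum>l<Suc n. 1/(2 * b l)) \<le> 1" unfolding b_def by (rule E_sum[OF R])
  finally show ?thesis by (simp add: Q_def b_def diff_divide_distrib)
qed

lemma head_lower:
  fixes R :: real assumes R: "R \<ge> 1"
  shows "(\<Sum>l<Suc n. (2 * real l + 1) / (2 * (R^2 + real l * (real l + 1))))
     \<ge> (ln (R^2 + real n * (real n + 1)) - ln (R^2))/2 - 1"
proof -
  define b where "b l = R^2 + real l * (real l + 1)" for l
  define P where "P l = ln (b l)/2" for l
  have R2: "R^2 \<ge> 1" using R by (simp add: one_le_power)
  have bpos: "b l > 0" for l unfolding b_def using R2 by (intro add_pos_nonneg) auto
  have step: "(2 * real l + 1) / (2 * b l) \<ge> P (Suc l) - P l - 1/(2 * b l)" for l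
  proof -
    have le: "b l \<le> b (Suc l)" unfolding b_def by (simp add: algebra_simps)
    have "ln (b (Suc l)) - ln (b l) \<le> (b (Suc l) - b l)/b l" using ln_diff_bounds(2)[OF bpos le] .
    moreover have "b (Suc l) - b l = 2 * real l + 2" unfolding b_def by (simp add: algebra_simps)
    moreover have "(2 * real l + 1) / (2 * b l) = (2 * real l + 2)/b l / 2 - 1/(2 * b l)"
      using bpos[of l] by (simp add: field_simps)
    ultimately show ?thesis unfolding P_def by simp
  qed
  have "(\<Sum>l<Suc n. (2 * real l + 1) / (2 * b l)) \<ge> (\<Sum>l<Suc n. (P (Suc l) - P l) - 1/(2 * b l))"
    by (intro sum_mono step)
  also have "(\<Sum>l<Suc n. (P (Suc l) - P l) - 1/(2 * b l)) = P (Suc n) - P 0 - (\<Sum>l<Suc n. 1/(2 * b l))"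
    by (simp only: sum_subtractf[of "\<lambda>l. P (Suc l) - P l"] sum_lessThan_telescope)
  finally have 1: "(\<Sum>l<Suc n. (2 * real l + 1) / (2 * b l)) \<ge> P (Suc n) - P 0 - (\<Sum>l<Suc n. 1/(2 * b l))" .
  have "(\<Sum>l<Suc n. 1/(2 * b l)) \<le> 1" unfolding b_def by (rule E_sum[OF R])
  moreover have "P n \<le> P (Suc n)" unfolding P_def using bpos[of n]
    by (intro divide_right_mono ln_mono) (auto simp: b_def algebra_simps)
  moreover have "P 0 = ln (R^2)/2" by (simp add: P_def b_def)
  ultimately have "(\<Sum>l<Suc n. (2 * real l + 1) / (2 * b l)) \<ge> P n - ln (R^2)/2 - 1"
    using 1 by linarith
  then show ?thesis by (simp add: P_def b_def diff_divide_distrib)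
qed

lemma term_tail:
  fixes R M \<kappa> :: real and l :: nat
  assumes R: "R \<ge> 1" and k: "\<kappa> > 0" and M: "M > 0" and lM: "real l > M" and l1: "real l > 1"
  shows "(2 * real l + 1) / (2 * (R^2 + real l * (real l + 1)) * (1 + real l * (real l + 1) / M^2) powr \<kappa>)
     \<le> M powr (2*\<kappa>) / (2*\<kappa>) * ((real l - 1) powr (-(2*\<kappa>)) - real l powr (-(2*\<kappa>)))"
proof -
  define x where "x = real l"
  define a where "a = 2*\<kappa>"
  have x0: "x > 1" "x > 0" using l1 x_def by auto
  have a0: "a > 0" using k a_def by simp
  define y where "y = x * (x + 1) / M^2"
  have "x*x \<le> x*(x+1)" using x0 by simp
  hence "(x*x)/M^2 \<le> x*(x+1)/M^2" by (intro divide_right_mono) auto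
  moreover have "(x/M)*(x/M) = (x*x)/M^2" by (simp add: power2_eq_square)
  ultimately have yge: "y \<ge> (x/M) * (x/M)" unfolding y_def by linarith
  have y0: "y \<ge> 0" unfolding y_def using x0 by simp
  have "(1+y) powr \<kappa> \<ge> y powr \<kappa>"
    using k y0 by (intro powr_mono2) auto
  moreover have "y powr \<kappa> \<ge> ((x/M) * (x/M)) powr \<kappa>"
    using k yge x0 M by (intro powr_mono2) auto
  moreover have "((x/M) * (x/M)) powr \<kappa> = x powr a / M powr a"
    using x0 M by (simp add: powr_mult powr_add[symmetric] powr_divide a_def)
  ultimately have F: "(1+y) powr \<kappa> \<ge> x powr a / M powr a" by linarith
  have xa: "x powr a > 0" "M powr a > 0" using x0 M by auto
  have bge: "R^2 + x * (x+1) \<ge> x * (x+1)" by simp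
  have "2 * (x * (x+1)) * (x powr a / M powr a) \<le> 2 * (R^2 + x * (x+1)) * (1+y) powr \<kappa>"
    using F bge xa x0 by (intro mult_mono) auto
  moreover have "0 < 2 * (x * (x+1)) * (x powr a / M powr a)" using xa x0 by auto
  ultimately have "(2 * x + 1) / (2 * (R^2 + x * (x+1)) * (1+y) powr \<kappa>)
      \<le> (2 * x + 1) / (2 * (x * (x+1)) * (x powr a / M powr a))"
    using x0 by (intro frac_le) auto
  also have "\<dots> = ((2*x+1)/(2*x+2)) * (M powr a * (x powr (-a) / x))"
    using x0 xa by (simp add: field_simps powr_minus)
  also have "\<dots> \<le> 1 * (M powr a * (x powr (-a) / x))"
    using x0 xa by (intro mult_right_mono) auto
  also have "x powr (-a) / x = x powr (-a-1)" using x0 by (simp add: powr_diff)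
  also have "1 * (M powr a * x powr (-a-1)) \<le> M powr a * (((x-1) powr (-a) - x powr (-a))/a)"
    using tail_ineq[OF a0 x0(1)] xa by (simp only: mult_1_left, intro mult_left_mono) auto
  finally show ?thesis unfolding x_def y_def a_def by simp
qed

lemma sum_split_add: "(\<Sum>l<K+m. f l) = (\<Sum>l<K. f l) + (\<Sum>k<m. f (K+k)) " for f :: "nat \<Rightarrow> real"
  by (induction m) auto

lemma main_bounds:
  fixes \<kappa> R N :: real
  assumes k: "\<kappa> > 0" and R: "R \<ge> 1" and N: "N \<ge> 1"
  defines "t \<equiv> (\<lambda>l::nat. (2 * real l + 1) /
              (2 * R^2 * (1 + real l * (real l + 1) / R^2)
                 * (1 + real l * (real l + 1) / (N * R)^2) powr \<kappa>))"
  shows "summable t" "suminf t \<le> ln (N+1) + 1 + 2 powr (2*\<kappa>) / (2*\<kappa>)"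
        "suminf t \<ge> ln (N+1) - ln 2 - 1 - 2*\<kappa>"
proof -
  define M where "M = N * R"
  define a where "a = 2*\<kappa>"
  define b where "b l = R^2 + real l * (real l + 1)" for l :: nat
  define w where "w l = (2 * real l + 1) / (2 * b l)" for l :: nat
  define L where "L = nat \<lfloor>M\<rfloor>"
  have R2: "R^2 \<ge> 1" using R by (simp add: one_le_power)
  have R2ne: "R^2 \<noteq> 0" using R2 by auto
  have Rne: "R \<noteq> 0" using R by auto
  have M1: "M \<ge> 1" unfolding M_def using R N by (metis mult_mono' mult_1 zero_le_one)
  have a0: "a > 0" using k a_def by simp
  have bpos: "b l > 0" for l unfolding b_def using R2 by (intro add_pos_nonneg) auto
  have LM: "real L \<le> M" "M < real L + 1" unfolding L_def using M1 by linarith+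
  have L1: "L \<ge> 1" using LM M1 by linarith
  have L1r: "real L \<ge> 1" using L1 by simp
  define F where "F l = (1 + real l * (real l + 1) / M^2) powr \<kappa>" for l :: nat
  have Fpos: "F l > 0" for l
  proof -
    have "1 + real l * (real l + 1) / M^2 > 0" by (intro add_pos_nonneg) auto
    then show ?thesis unfolding F_def by simp
  qed
  have t_eq: "t l = w l * (1 / F l)" for l
  proof -
    have "2 * R^2 * (1 + real l * (real l + 1) / R^2) = 2 * b l" unfolding b_def using R2
      using R2ne by (simp add: field_simps)
    then show ?thesis unfolding t_def w_def F_def M_def by simp
  qed
  have w0: "w l \<ge> 0" for l unfolding w_def using bpos[of l] by simp
  have t0: "t l \<ge> 0" for l unfolding t_eq using w0 Fpos[of l] by simp
  have tw: "t l \<le> w l" for l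
  proof -
    have "1 / F l \<le> 1" unfolding F_def using kappa_factor(2)[OF k, of "real l * (real l + 1) / M^2"] by simp
    from mult_left_mono[OF this w0[of l]] show ?thesis unfolding t_eq by simp
  qed
  have tlow: "t l \<ge> w l - \<kappa> * (2 * real l + 1) / (2 * M^2)" for l
  proof -
    define y where "y = real l * (real l + 1) / M^2"
    have "1 - \<kappa> * y \<le> 1 / F l" unfolding F_def y_def using kappa_factor(1)[OF k, of "real l * (real l + 1) / M^2"] by simp
    hence "w l * (1 - \<kappa> * y) \<le> t l" unfolding t_eq using w0[of l] by (intro mult_left_mono) auto
    moreover have "w l * y \<le> (2 * real l + 1) / (2 * M^2)"
    proof -
      have "w l * y = (2 * real l + 1) / (2 * M^2) * (real l * (real l + 1) / b l)"
        unfolding w_def y_def by (simp add: field_simps)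
      also have "real l * (real l + 1) / b l \<le> 1" using bpos[of l] unfolding b_def by simp
      hence "(2 * real l + 1) / (2 * M^2) * (real l * (real l + 1) / b l) \<le> (2 * real l + 1) / (2 * M^2) * 1"
        by (intro mult_left_mono) auto
      finally show ?thesis by simp
    qed
    hence "\<kappa> * (w l * y) \<le> \<kappa> * ((2 * real l + 1) / (2 * M^2))" using k by (intro mult_left_mono) auto
    moreover have "w l * (1 - \<kappa> * y) = w l - \<kappa> * (w l * y)" by (simp add: algebra_simps)
    moreover have "\<kappa> * ((2 * real l + 1) / (2 * M^2)) = \<kappa> * (2 * real l + 1) / (2 * M^2)" by simp
    ultimately show ?thesis by linarith
  qed
  define D where "D l = real l powr (-a)" for l :: nat
  have ttail: "t l \<le> M powr a / a * (D (l - 1) - D l)" if "l \<ge> L + 1" for l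
  proof -
    have lM: "real l > M" using that LM by linarith
    have l1: "real l > 1" using that L1 by linarith
    have "t l = (2 * real l + 1) / (2 * (R^2 + real l * (real l + 1)) * (1 + real l * (real l + 1) / M^2) powr \<kappa>)"
      unfolding t_eq w_def F_def b_def by simp
    also have "\<dots> \<le> M powr (2*\<kappa>) / (2*\<kappa>) * ((real l - 1) powr (-(2*\<kappa>)) - real l powr (-(2*\<kappa>)))"
      by (rule term_tail[OF R k _ lM l1]) (use M1 in simp)
    also have "real l - 1 = real (l - 1)" using l1 by simp
    finally show ?thesis unfolding D_def a_def by simp
  qed
  have headU: "(\<Sum>l<Suc L. w l) \<le> (ln (b L) - ln (R^2))/2 + 1"
    unfolding w_def b_def by (rule head_upper[OF R])
  have headL: "(\<Sum>l<Suc L. w l) \<ge> (ln (b L) - ln (R^2))/2 - 1"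
    unfolding w_def b_def by (rule head_lower[OF R])
  have bLU: "b L \<le> R^2 * (N+1)^2"
  proof -
    have NR: "N / R \<le> N" using R N by (simp add: divide_le_eq mult_le_cancel_left1 less_le_trans[OF zero_less_one])
    have "real L * (real L + 1) \<le> M * (M + 1)" using LM by (intro mult_mono) auto
    also have "M * (M+1) = R^2 * (N^2 + N / R)" unfolding M_def using R by (simp add: field_simps power2_eq_square)
    also have "R^2 * (N^2 + N / R) \<le> R^2 * (N^2 + N)" using NR by (intro mult_left_mono) auto
    finally have "b L \<le> R^2 + R^2 * (N^2 + N)" unfolding b_def by simp
    also have "\<dots> \<le> R^2 * (N+1)^2" using N by (simp add: power2_eq_square algebra_simps)
    finally show ?thesis .
  qed
  have bLL: "b L \<ge> R^2 * ((N+1)^2 / 4)"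
  proof -
    have "(M - 1) * M \<le> real L * (real L + 1)" using LM M1 by (intro mult_mono) auto
    moreover have "(M - 1) * M = R^2 * (N^2 - N / R)" unfolding M_def using R by (simp add: field_simps power2_eq_square)
    moreover have "N / R \<le> N" using R N by (simp add: divide_le_eq mult_le_cancel_left1 less_le_trans[OF zero_less_one])
    hence "R^2 * (N^2 - N) \<le> R^2 * (N^2 - N / R)" by (intro mult_left_mono) auto
    ultimately have "b L \<ge> R^2 + R^2 * (N^2 - N)" unfolding b_def by simp
    moreover have "R^2 + R^2 * (N^2 - N) \<ge> R^2 * ((N+1)^2 / 4)"
    proof -
      have e: "(N+1)^2/4 = 1 + (N^2-N) - 3*(N-1)^2/4" by (simp add: power2_eq_square field_simps)
      have "0 \<le> 3*(N-1)^2/4" by simp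
      hence "(N+1)^2 / 4 \<le> 1 + (N^2 - N)" using e by linarith
      hence "R^2 * ((N+1)^2 / 4) \<le> R^2 * (1 + (N^2 - N))" by (intro mult_left_mono) auto
      then show ?thesis by (simp add: algebra_simps)
    qed
    ultimately show ?thesis by linarith
  qed
  have lnU: "(ln (b L) - ln (R^2))/2 \<le> ln (N+1)"
  proof -
    have "ln (b L) \<le> ln (R^2 * (N+1)^2)" using bLU bpos[of L] by simp
    also have "\<dots> = ln (R^2) + 2 * ln (N+1)" using R2 N Rne by (simp add: ln_mult ln_realpow)
    finally show ?thesis by simp
  qed
  have lnL: "(ln (b L) - ln (R^2))/2 \<ge> ln (N+1) - ln 2"
  proof -
    have l4: "ln (4::real) = 2 * ln 2" using ln_realpow[of 2 2] by simp
    have "ln (b L) \<ge> ln (R^2 * ((N+1)^2/4))" using bLL N R2 bpos[of L] by (subst ln_le_cancel_iff) (auto intro!: mult_pos_pos)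
    moreover have "ln (R^2 * ((N+1)^2/4)) = ln (R^2) + 2 * ln (N+1) - 2 * ln 2" using R2 N Rne l4
      by (simp add: ln_mult ln_div ln_realpow)
    ultimately show ?thesis by simp
  qed
  have tailsum: "(\<Sum>k<m. t (Suc L + k)) \<le> 2 powr a / a" for m
  proof -
    have "(\<Sum>k<m. t (Suc L + k)) \<le> (\<Sum>k<m. M powr a / a * (D (L + k) - D (Suc (L + k))))"
      using ttail[of "Suc L + k" for k] by (intro sum_mono) simp
    also have "\<dots> = M powr a / a * (D L - D (L + m))"
      using sum_lessThan_telescope'[of "\<lambda>k. D (L + k)" m]
      by (simp only: sum_distrib_left[symmetric]) simp
    also have "\<dots> \<le> M powr a / a * D L"
      using a0 by (intro mult_left_mono) (auto simp: D_def)
    finally have X: "(\<Sum>k<m. t (Suc L + k)) \<le> M powr a / a * D L" .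
    have "M powr a * D L = (M / real L) powr a"
      unfolding D_def using M1 L1 by (simp add: powr_divide powr_minus_divide)
    also have "(M / real L) powr a \<le> 2 powr a"
      proof -
      have "M \<le> 2 * real L" using LM L1r by linarith
      then show ?thesis using a0 L1r M1 by (intro powr_mono2) (auto simp: divide_le_eq)
    qed
    finally have "M powr a * D L / a \<le> 2 powr a / a" using a0 by (simp add: divide_right_mono)
    then show ?thesis using X by simp
  qed
  have partial: "(\<Sum>l<n. t l) \<le> ln (N+1) + 1 + 2 powr a / a" for n
  proof -
    have "(\<Sum>l<n. t l) \<le> (\<Sum>l<n + Suc L. t l)"
      unfolding sum_split_add using t0 by (simp add: sum_nonneg)
    also have "\<dots> = (\<Sum>l<Suc L. t l) + (\<Sum>k<n. t (Suc L + k))"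
      using sum_split_add[of t "Suc L" n] by (simp add: add.commute)
    also have "(\<Sum>l<Suc L. t l) \<le> (\<Sum>l<Suc L. w l)" by (intro sum_mono tw)
    finally show ?thesis using tailsum[of n] headU lnU by linarith
  qed
  show sm: "summable t"
  proof (rule bounded_imp_summable[where B = "ln (N+1) + 1 + 2 powr a / a"])
    show "0 \<le> t n" for n by (rule t0)
    show "(\<Sum>k\<le>n. t k) \<le> ln (N+1) + 1 + 2 powr a / a" for n
      using partial[of "Suc n"] by (simp only: lessThan_Suc_atMost)
  qed
  show "suminf t \<le> ln (N+1) + 1 + 2 powr (2*\<kappa>) / (2*\<kappa>)"
    using suminf_le_const[OF sm partial] unfolding a_def .
  have "(\<Sum>l<Suc L. t l) \<le> suminf t" using sm t0 by (intro sum_le_suminf) auto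
  moreover have "(\<Sum>l<Suc L. t l) \<ge> (\<Sum>l<Suc L. w l - \<kappa> * (2 * real l + 1) / (2 * M^2))"
    by (intro sum_mono tlow)
  moreover have "(\<Sum>l<Suc L. \<kappa> * (2 * real l + 1) / (2 * M^2)) \<le> 2 * \<kappa>"
  proof -
    have "(\<Sum>l<Suc L. \<kappa> * (2 * real l + 1) / (2 * M^2)) = \<kappa> / (2 * M^2) * (\<Sum>l<Suc L. (2 * real l + 1))"
      unfolding sum_distrib_left by (rule sum.cong) auto
    also have "\<dots> = \<kappa> / (2 * M^2) * (real L + 1)^2" by (simp only: odd_sum) simp
    also have "(real L + 1)^2 \<le> (2 * M)^2" using LM M1 by (intro power_mono) auto
    hence "\<kappa> / (2 * M^2) * (real L + 1)^2 \<le> \<kappa> / (2 * M^2) * (2 * M)^2" using k by (intro mult_left_mono) auto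
    also have "\<kappa> / (2 * M^2) * (2 * M)^2 = 2 * \<kappa>" using M1 by (simp add: field_simps power2_eq_square)
    finally show ?thesis .
  qed
  ultimately show "suminf t \<ge> ln (N+1) - ln 2 - 1 - 2*\<kappa>"
    using headL lnL unfolding sum_subtractf by linarith
qed

theorem mainTheorem8:
  fixes \<kappa> :: real
  assumes "\<kappa> > 0"
  shows "\<exists>C::real. C > 0 \<and> (\<forall>R N :: real. R \<ge> 1 \<longrightarrow> N \<ge> 1 \<longrightarrow>
     -C \<le> (\<Sum>l. (2 * real l + 1) /
              (2 * R^2 * (1 + real l * (real l + 1) / R^2)
                 * (1 + real l * (real l + 1) / (N * R)^2) powr \<kappa>)) - ln (N + 1)
   \<and> (\<Sum>l. (2 * real l + 1) /
              (2 * R^2 * (1 + real l * (real l + 1) / R^2)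
                 * (1 + real l * (real l + 1) / (N * R)^2) powr \<kappa>)) - ln (N + 1) \<le> C)"
proof -
  define C where "C = 2 + 2*\<kappa> + 2 powr (2*\<kappa>) / (2*\<kappa>)"
  have Cpos: "C > 0" unfolding C_def using assms by (intro add_pos_nonneg) auto
  have l2: "ln (2::real) \<le> 1" using ln_2_less_1 by simp
  show ?thesis
  proof (intro exI[of _ C] conjI allI impI Cpos)
    fix R N :: real assume R: "R \<ge> 1" and N: "N \<ge> 1"
    note mb = main_bounds[OF assms R N]
    have p: "0 \<le> 2 powr (2*\<kappa>) / (2*\<kappa>)" using assms by simp
    from mb(3) l2 assms p show "-C \<le> (\<Sum>l. (2 * real l + 1) /
              (2 * R^2 * (1 + real l * (real l + 1) / R^2)
                 * (1 + real l * (real l + 1) / (N * R)^2) powr \<kappa>)) - ln (N + 1)"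
      unfolding C_def by linarith
    from mb(2) assms show "(\<Sum>l. (2 * real l + 1) /
              (2 * R^2 * (1 + real l * (real l + 1) / R^2)
                 * (1 + real l * (real l + 1) / (N * R)^2) powr \<kappa>)) - ln (N + 1) \<le> C"
      unfolding C_def by linarith
  qed
qed

end
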